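(* Let $3\le k\le n-1$ and let $T$ be a tree attaining the maximum value of $M_2$ over $\mathcal{CT}_{n,k}$. If $u$ is a vertex of degree $3$ in $T$, then $u$ has at most one branching neighbor.
   Context: A chemical tree is a tree with maximum degree at most $4$. A branching vertex is a vertex of degree greater than $2$. A segment of a tree is a path of positive length neither of whose end vertices has degree $2$ and all of whose internal vertices have degree $2$. $\mathcal{CT}_{n,k}$ is the class of all $n$-vertex chemical trees with exactly $k$ segments. $M_2(G)=\sum_{uv\in E(G)}d_ud_v$, where $d_v$ is the degree of $v$. *)

theory Defs
  imports Main
begin

definition graph :: "'a set \<Rightarrow> 'a set set \<Rightarrow> bool" where
  "graph V E \<longleftrightarrow> finite V \<and> (\<forall>e\<in>E. e \<subseteq> V \<and> card e = 2)"

definition deg :: "'a set set \<Rightarrow> 'a \<Rightarrow> nat" where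
  "deg E v = card {e \<in> E. v \<in> e}"

definition walk :: "'a set set \<Rightarrow> 'a list \<Rightarrow> bool" where
  "walk E p \<longleftrightarrow> p \<noteq> [] \<and> (\<forall>i. Suc i < length p \<longrightarrow> {p ! i, p ! Suc i} \<in> E)"

definition gpath :: "'a set set \<Rightarrow> 'a list \<Rightarrow> bool" where
  "gpath E p \<longleftrightarrow> walk E p \<and> distinct p"

definition gconnected :: "'a set \<Rightarrow> 'a set set \<Rightarrow> bool" where
  "gconnected V E \<longleftrightarrow> (\<forall>u\<in>V. \<forall>v\<in>V. \<exists>p. gpath E p \<and> hd p = u \<and> last p = v)"

definition gcycle :: "'a set set \<Rightarrow> 'a list \<Rightarrow> bool" where
  "gcycle E p \<longleftrightarrow> length p \<ge> 3 \<and> gpath E p \<and> {last p, hd p} \<in> E"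

definition tree :: "'a set \<Rightarrow> 'a set set \<Rightarrow> bool" where
  "tree V E \<longleftrightarrow> graph V E \<and> V \<noteq> {} \<and> gconnected V E \<and> \<not> (\<exists>p. gcycle E p)"

definition chemical_tree :: "'a set \<Rightarrow> 'a set set \<Rightarrow> bool" where
  "chemical_tree V E \<longleftrightarrow> tree V E \<and> (\<forall>v\<in>V. deg E v \<le> 4)"

definition segment :: "'a set set \<Rightarrow> 'a list \<Rightarrow> bool" where
  "segment E p \<longleftrightarrow> gpath E p \<and> length p \<ge> 2 \<and> deg E (hd p) \<noteq> 2 \<and> deg E (last p) \<noteq> 2
     \<and> (\<forall>i. 0 < i \<and> i < length p - 1 \<longrightarrow> deg E (p ! i) = 2)"

definition segments :: "'a set set \<Rightarrow> 'a set set" where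
  "segments E = {set p | p. segment E p}"

definition in_CT :: "'a set \<Rightarrow> 'a set set \<Rightarrow> nat \<Rightarrow> nat \<Rightarrow> bool" where
  "in_CT V E n k \<longleftrightarrow> chemical_tree V E \<and> card V = n \<and> card (segments E) = k"

definition M2 :: "'a set set \<Rightarrow> nat" where
  "M2 E = (\<Sum>e\<in>E. \<Prod>v\<in>e. deg E v)"

end

theory Submission
  imports Defs
begin

definition adj :: "'a set set \<Rightarrow> ('a \<times> 'a) set" where
  "adj E = {(x,y). {x,y} \<in> E}"

abbreviation reach :: "'a set set \<Rightarrow> 'a \<Rightarrow> 'a \<Rightarrow> bool" where
  "reach E x y \<equiv> (x,y) \<in> (adj E)\<^sup>*"

definition nbrs :: "'a set set \<Rightarrow> 'a \<Rightarrow> 'a set" where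
  "nbrs E z = {y. {z,y} \<in> E}"

lemma graph_finE: "graph V E \<Longrightarrow> finite E"
  unfolding graph_def by (meson Pow_iff finite_Pow_iff rev_finite_subset subsetI)

lemma graph_edge: "graph V E \<Longrightarrow> {x,y} \<in> E \<Longrightarrow> x \<in> V \<and> y \<in> V \<and> x \<noteq> y"
  unfolding graph_def by fastforce

lemma nbrs_sub: "graph V E \<Longrightarrow> nbrs E z \<subseteq> V"
  unfolding nbrs_def using graph_edge by fastforce

lemma nbrs_fin: "graph V E \<Longrightarrow> finite (nbrs E z)"
  using nbrs_sub graph_def by (metis finite_subset)

lemma deg_nbrs: assumes g: "graph V E" shows "deg E z = card (nbrs E z)"
proof -
  have "bij_betw (\<lambda>y. {z,y}) (nbrs E z) {e\<in>E. z\<in>e}"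
  proof (rule bij_betwI')
    fix x y assume "x \<in> nbrs E z" "y \<in> nbrs E z"
    then have "z \<noteq> x" "z \<noteq> y" using graph_edge[OF g] unfolding nbrs_def by auto
    then show "({z, x} = {z, y}) = (x = y)" by (auto simp: doubleton_eq_iff)
  next
    fix x assume "x \<in> nbrs E z" then show "{z,x} \<in> {e \<in> E. z \<in> e}" unfolding nbrs_def by auto
  next
    fix e assume "e \<in> {e \<in> E. z \<in> e}"
    then have "e \<in> E" "z \<in> e" by auto
    then have "card e = 2" using g unfolding graph_def by auto
    then obtain a b where "e = {a,b}" "a \<noteq> b" by (meson card_2_iff)
    then have "e = {z, (if z = a then b else a)}" using \<open>z \<in> e\<close> by auto
    then show "\<exists>y\<in>nbrs E z. e = {z, y}" using \<open>e \<in> E\<close> unfolding nbrs_def by blast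
  qed
  then show ?thesis unfolding deg_def by (simp add: bij_betw_same_card)
qed

lemma nbrs_sym: "y \<in> nbrs E z \<longleftrightarrow> z \<in> nbrs E y"
  unfolding nbrs_def by (simp add: insert_commute)

lemma adj_sym: "(x,y) \<in> adj E \<longleftrightarrow> (y,x) \<in> adj E"
  unfolding adj_def by (simp add: insert_commute)

lemma reach_sym: "reach E x y \<Longrightarrow> reach E y x"
proof -
  have c: "(adj E)\<inverse> = adj E" using adj_sym by fast
  assume "reach E x y"
  then have "(y,x) \<in> ((adj E)\<inverse>)\<^sup>*" by (simp add: rtrancl_converseI)
  then show ?thesis using c by simp
qed

lemma reach_mono: "reach E x y \<Longrightarrow> E \<subseteq> F \<Longrightarrow> reach F x y"
proof -
  assume "reach E x y" "E \<subseteq> F"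
  moreover have "adj E \<subseteq> adj F" using \<open>E \<subseteq> F\<close> unfolding adj_def by auto
  ultimately show ?thesis using rtrancl_mono by blast
qed

lemma reach_edge: "{x,y} \<in> E \<Longrightarrow> reach E x y"
  unfolding adj_def by auto

lemma reach_trans: "reach E x y \<Longrightarrow> reach E y z \<Longrightarrow> reach E x z"
  by (rule rtrancl_trans)

lemma walk_mono: "walk E p \<Longrightarrow> E \<subseteq> F \<Longrightarrow> walk F p"
  unfolding walk_def by auto

lemma seg_reach:
  assumes "\<forall>j. l \<le> j \<and> j < r \<longrightarrow> {p!j, p!Suc j} \<in> F" "l \<le> r"
  shows "reach F (p!l) (p!r)"
  using assms
proof (induction r)
  case 0 then show ?case by simp
next
  case (Suc r)
  show ?case
  proof (cases "l = Suc r")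
    case True then show ?thesis by simp
  next
    case False
    then have "reach F (p!l) (p!r)" using Suc by auto
    moreover have "{p!r, p!Suc r} \<in> F" using Suc False by auto
    ultimately show ?thesis using reach_edge reach_trans by metis
  qed
qed

lemma walk_reach: "walk E p \<Longrightarrow> reach E (hd p) (last p)"
proof -
  assume w: "walk E p"
  then have ne: "p \<noteq> []" unfolding walk_def by auto
  have "reach E (p!0) (p!(length p - 1))"
    by (rule seg_reach) (use w ne in \<open>auto simp: walk_def\<close>)
  then show ?thesis using ne by (simp add: hd_conv_nth last_conv_nth)
qed

lemma gpath_drop: "gpath E p \<Longrightarrow> j < length p \<Longrightarrow> gpath E (drop j p)"
  unfolding gpath_def walk_def by auto

lemma gpath_take: "gpath E p \<Longrightarrow> 0 < j \<Longrightarrow> gpath E (take j p)"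
  unfolding gpath_def walk_def by (auto simp: take_eq_Nil)

lemma reach_gpath:
  assumes "reach E x y" shows "\<exists>p. gpath E p \<and> hd p = x \<and> last p = y"
  using assms
proof (induction rule: converse_rtrancl_induct)
  case base
  then show ?case by (rule exI[of _ "[y]"]) (auto simp: gpath_def walk_def)
next
  case (step x z)
  then obtain p where p: "gpath E p" "hd p = z" "last p = y" by blast
  have ne: "p \<noteq> []" using p unfolding gpath_def walk_def by auto
  show ?case
  proof (cases "x \<in> set p")
    case True
    then obtain ys zs where s: "p = ys @ x # zs" by (meson split_list)
    have "gpath E (drop (length ys) p)" using p(1) s by (intro gpath_drop) auto
    moreover have "drop (length ys) p = x # zs" using s by simp
    ultimately show ?thesis using p s by (metis last_appendR last_ConsR list.sel(1) list.simps(3) last.simps)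
  next
    case False
    have "{x,z} \<in> E" using step(1) unfolding adj_def by auto
    then have "gpath E (x # p)" using p ne False unfolding gpath_def walk_def
      by (auto simp: nth_Cons hd_conv_nth split: nat.split)
    then show ?thesis using p ne by auto
  qed
qed

lemma tree_graph: "tree V E \<Longrightarrow> graph V E" unfolding tree_def by auto

lemma tree_nocycle: "tree V E \<Longrightarrow> \<not> gcycle E p" unfolding tree_def by auto

lemma gconnected_reach: "gconnected V E \<longleftrightarrow> (\<forall>x\<in>V. \<forall>y\<in>V. reach E x y)"
  unfolding gconnected_def using reach_gpath walk_reach gpath_def by metis

lemma reach_in_V: assumes "graph V E" "reach E x y" "x \<in> V" shows "y \<in> V"
  using assms(2,3)
proof (induction rule: rtrancl_induct)
  case base then show ?case by simp
next
  case (step y z) then show ?case using graph_edge[OF assms(1)] unfolding adj_def by auto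
qed

lemma bridge:
  assumes t: "tree V E" and e: "{a,b} \<in> E"
  shows "\<not> reach (E - {{a,b}}) a b"
proof
  assume "reach (E - {{a,b}}) a b"
  from reach_gpath[OF this] obtain p where p: "gpath (E - {{a,b}}) p" "hd p = a" "last p = b" by blast
  have ab: "a \<noteq> b" using graph_edge[OF tree_graph[OF t] e] by auto
  have ne: "p \<noteq> []" using p unfolding gpath_def walk_def by auto
  have "length p \<noteq> 1" using p ab ne by (cases p) auto
  moreover have "length p \<noteq> 2"
  proof
    assume l2: "length p = 2"
    then have "{p!0, p!1} \<in> E - {{a,b}}" using p unfolding gpath_def walk_def by auto
    moreover have "p!0 = a" "p!1 = b" using p ne l2 by (auto simp: hd_conv_nth last_conv_nth)
    ultimately show False by auto
  qed
  moreover have "length p \<noteq> 0" using ne by auto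
  ultimately have "length p \<ge> 3" by presburger
  moreover have "{last p, hd p} \<in> E" using p e by (simp add: insert_commute)
  moreover have "walk E p" using p walk_mono[of "E - {{a,b}}" p E] unfolding gpath_def by auto
  ultimately have "gcycle E p" using p unfolding gcycle_def gpath_def by auto
  then show False using tree_nocycle[OF t] by auto
qed

lemma path_last_nbr:
  assumes t: "tree V E" and p: "gpath E q" "2 \<le> length q" and e: "{last q, r} \<in> E" and r: "r \<in> set q"
  shows "r = q ! (length q - 2)"
proof -
  obtain j where j: "j < length q" "q!j = r" using r by (meson in_set_conv_nth)
  have ne: "q \<noteq> []" using p by auto
  have lq: "last q = q ! (length q - 1)" using ne by (simp add: last_conv_nth)
  have "r \<noteq> last q" using graph_edge[OF tree_graph[OF t] e] by auto
  then have "j \<noteq> length q - 1" using j lq by auto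
  moreover have "\<not> j < length q - 2"
  proof
    assume jl: "j < length q - 2"
    have "hd (drop j q) = q!j" using j by (simp add: hd_drop_conv_nth)
    moreover have "last (drop j q) = last q" using jl by simp
    moreover have "{last q, q!j} \<in> E" using e j by simp
    moreover have "3 \<le> length (drop j q)" using jl by simp
    ultimately have "gcycle E (drop j q)" unfolding gcycle_def
      using gpath_drop[OF p(1), of j] j by simp
    then show False using tree_nocycle[OF t] by auto
  qed
  ultimately have "j = length q - 2" using j(1) p(2) by presburger
  then show ?thesis using j by simp
qed

lemma dedge_inj: "distinct p \<Longrightarrow> Suc i < length p \<Longrightarrow> Suc j < length p \<Longrightarrow> {p!i, p!Suc i} = {p!j, p!Suc j} \<Longrightarrow> i = j"
  by (auto simp: doubleton_eq_iff nth_eq_iff_index_eq)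

lemma dedge_close:
  assumes "distinct p" "3 \<le> length p" "Suc i < length p"
  shows "{p!i, p!Suc i} \<noteq> {p!(length p - 1), p!0}"
proof
  assume "{p!i, p!Suc i} = {p!(length p - 1), p!0}"
  then consider "p!i = p!(length p - 1)" | "p!i = p!0 \<and> p!Suc i = p!(length p - 1)"
    by (auto simp: doubleton_eq_iff)
  then show False
  proof cases
    case 1 then show False using assms nth_eq_iff_index_eq[OF assms(1), of i "length p - 1"] by auto
  next
    case 2
    have ne: "p \<noteq> []" using assms by auto
    then have "i = 0" using 2 assms nth_eq_iff_index_eq[OF assms(1), of i 0] by auto
    moreover have "Suc i = length p - 1" using 2 assms nth_eq_iff_index_eq[OF assms(1), of "Suc i" "length p - 1"] by auto
    ultimately show False using assms by auto
  qed
qed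

lemma rotate_tree:
  assumes t: "tree V E" and ab: "{a,b} \<in> E" and ac: "reach (E - {{a,b}}) a c"
  shows "tree V (insert {c,b} (E - {{a,b}}))" (is "tree V ?E'")
proof -
  have g: "graph V E" using t by (rule tree_graph)
  have aV: "a \<in> V" "b \<in> V" using graph_edge[OF g ab] by auto
  have cV: "c \<in> V" using reach_in_V[OF _ ac aV(1)] g unfolding graph_def by auto
  have cb: "c \<noteq> b" using bridge[OF t ab] ac by auto
  have g': "graph V ?E'" using g cV aV cb unfolding graph_def by auto
  have sub: "?E' - {{c,b}} \<subseteq> E - {{a,b}}" by auto
  have "adj E \<subseteq> (adj ?E')\<^sup>*"
  proof
    fix xy assume "xy \<in> adj E"
    then obtain x y where xy: "xy = (x,y)" "{x,y} \<in> E" unfolding adj_def by auto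
    show "xy \<in> (adj ?E')\<^sup>*"
    proof (cases "{x,y} = {a,b}")
      case True
      have "reach ?E' a c" using reach_mono[OF ac] by auto
      moreover have "reach ?E' c b" by (rule reach_edge) auto
      ultimately have "reach ?E' a b" by (rule reach_trans)
      moreover have "reach ?E' b a" using reach_sym[OF \<open>reach ?E' a b\<close>] .
      ultimately show ?thesis using True xy by (auto simp: doubleton_eq_iff)
    next
      case False
      then show ?thesis using xy reach_edge[of x y ?E'] by auto
    qed
  qed
  then have "(adj E)\<^sup>* \<subseteq> (adj ?E')\<^sup>*" by (rule rtrancl_subset_rtrancl)
  then have conn: "gconnected V ?E'" using t unfolding tree_def gconnected_reach by auto
  have nocyc: "\<not> gcycle ?E' p" for p
  proof
    assume cy: "gcycle ?E' p"
    define m where "m = length p"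
    define F where "F = ?E' - {{c,b}}"
    have m3: "3 \<le> m" and dp: "distinct p" and wp: "\<forall>i. Suc i < m \<longrightarrow> {p!i, p!Suc i} \<in> ?E'"
      and cl0: "{last p, hd p} \<in> ?E'"
      using cy unfolding gcycle_def gpath_def walk_def m_def by auto
    have "p \<noteq> []" using m3 unfolding m_def by auto
    then have "last p = p!(m-1)" "hd p = p!0" unfolding m_def by (auto simp: hd_conv_nth last_conv_nth)
    then have cl: "{p!(m-1), p!0} \<in> ?E'" using cl0 by simp
    have FE: "F \<subseteq> E - {{a,b}}" unfolding F_def by auto
    have "reach F b c"
    proof (cases "\<exists>i. Suc i < m \<and> {p!i, p!Suc i} = {c,b}")
      case True
      then obtain i where i: "Suc i < m" "{p!i, p!Suc i} = {c,b}" by blast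
      have oth: "{p!j, p!Suc j} \<in> F" if "Suc j < m" "j \<noteq> i" for j
      proof -
        have "{p!j, p!Suc j} \<noteq> {c,b}"
        proof
          assume "{p!j, p!Suc j} = {c,b}"
          then have "{p!i, p!Suc i} = {p!j, p!Suc j}" using i(2) by simp
          then have "i = j" using dedge_inj[OF dp, of i j] i(1) that(1) unfolding m_def by blast
          then show False using that(2) by simp
        qed
        moreover have "{p!j, p!Suc j} \<in> ?E'" using wp that(1) by blast
        ultimately show ?thesis unfolding F_def by blast
      qed
      have "{p!(m-1), p!0} \<noteq> {c,b}" using dedge_close[OF dp, of i] i m3 unfolding m_def by simp
      then have clF: "{p!(m-1), p!0} \<in> F" using cl unfolding F_def by blast
      have r1: "reach F (p!Suc i) (p!(m-1))" by (rule seg_reach) (use oth i in auto)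
      have r2: "reach F (p!(m-1)) (p!0)" using reach_edge[OF clF] .
      have r3: "reach F (p!0) (p!i)" by (rule seg_reach) (use oth i in auto)
      have "reach F (p!Suc i) (p!i)" using reach_trans[OF reach_trans[OF r1 r2] r3] .
      moreover have "reach F (p!i) (p!Suc i)" using reach_sym[OF \<open>reach F (p!Suc i) (p!i)\<close>] .
      ultimately show ?thesis using i by (auto simp: doubleton_eq_iff)
    next
      case False
      show ?thesis
      proof (cases "{p!(m-1), p!0} = {c,b}")
        case True
        have oth: "{p!j, p!Suc j} \<in> F" if "Suc j < m" for j
        proof -
          have "{p!j, p!Suc j} \<noteq> {c,b}" using dedge_close[OF dp, of j] True m3 that unfolding m_def by simp
          moreover have "{p!j, p!Suc j} \<in> ?E'" using wp that(1) by blast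
          ultimately show ?thesis unfolding F_def by blast
        qed
        have "reach F (p!0) (p!(m-1))" by (rule seg_reach) (use oth in auto)
        moreover have "reach F (p!(m-1)) (p!0)" using reach_sym[OF \<open>reach F (p!0) (p!(m-1))\<close>] .
        ultimately show ?thesis using True by (auto simp: doubleton_eq_iff)
      next
        case False2: False
        have "walk E p" unfolding walk_def
        proof (intro conjI allI impI)
          show "p \<noteq> []" by fact
          fix i assume "Suc i < length p"
          then have "{p!i, p!Suc i} \<in> ?E'" "{p!i, p!Suc i} \<noteq> {c,b}" using wp False unfolding m_def by auto
          then show "{p!i, p!Suc i} \<in> E" by blast
        qed
        moreover have "{p!(m-1), p!0} \<in> E" using cl False2 by blast
        moreover have "last p = p!(m-1)" "hd p = p!0" using \<open>last p = p!(m-1)\<close> \<open>hd p = p!0\<close> by auto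
        ultimately have "gcycle E p" using cy unfolding gcycle_def gpath_def by auto
        then show ?thesis using tree_nocycle[OF t] by auto
      qed
    qed
    then have "reach (E - {{a,b}}) b c" using reach_mono[OF _ FE] by blast
    then have "reach (E - {{a,b}}) a b" using reach_trans[OF ac reach_sym] by blast
    then show False using bridge[OF t ab] by auto
  qed
  show ?thesis unfolding tree_def using g' conn nocyc t unfolding tree_def by auto
qed

lemma rotate_deg:
  assumes fin: "finite E" and ab: "{a,b} \<in> E" and cb: "{c,b} \<notin> E" and d: "a \<noteq> b" "c \<noteq> b" "a \<noteq> c"
  shows "deg (insert {c,b} (E - {{a,b}})) z = (if z = a then deg E z - 1 else if z = c then deg E z + 1 else deg E z)"
proof -
  let ?E' = "insert {c,b} (E - {{a,b}})"
  have fz: "finite {e\<in>E. z\<in>e}" using fin by auto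
  show ?thesis
  proof (cases "z = a")
    case True
    then have "{e\<in>?E'. z\<in>e} = {e\<in>E. z\<in>e} - {{a,b}}" using d by auto
    then show ?thesis unfolding deg_def using True ab fz by (simp add: card_Diff_singleton)
  next
    case za: False
    show ?thesis
    proof (cases "z = c")
      case True
      then have "{e\<in>?E'. z\<in>e} = insert {c,b} {e\<in>E. z\<in>e}" using d by auto
      then show ?thesis unfolding deg_def using True za cb fz by simp
    next
      case zc: False
      show ?thesis
      proof (cases "z = b")
        case True
        then have "{e\<in>?E'. z\<in>e} = insert {c,b} ({e\<in>E. z\<in>e} - {{a,b}})" using d by auto
        moreover have "card (insert {c,b} ({e\<in>E. z\<in>e} - {{a,b}})) = card {e\<in>E. z\<in>e}"
        proof -
          have "{a,b} \<in> {e\<in>E. z\<in>e}" using ab True by auto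
          then have "card {e\<in>E. z\<in>e} > 0" using fz card_gt_0_iff by blast
          moreover have "card (insert {c,b} ({e\<in>E. z\<in>e} - {{a,b}})) = Suc (card ({e\<in>E. z\<in>e} - {{a,b}}))"
            using fz cb by (simp add: card_insert_disjoint)
          moreover have "card ({e\<in>E. z\<in>e} - {{a,b}}) = card {e\<in>E. z\<in>e} - 1"
            using fz \<open>{a,b} \<in> {e\<in>E. z\<in>e}\<close> by (simp add: card_Diff_singleton)
          ultimately show ?thesis by simp
        qed
        ultimately show ?thesis unfolding deg_def using za zc by simp
      next
        case False
        then have "{e\<in>?E'. z\<in>e} = {e\<in>E. z\<in>e}" using za zc by auto
        then show ?thesis unfolding deg_def using za zc by simp
      qed
    qed
  qed
qed

definition SP :: "'a set set \<Rightarrow> 'a list set" where "SP E = {p. segment E p}"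

lemma segments_SP: "segments E = set ` SP E" unfolding segments_def SP_def by auto

lemma deg2_three:
  assumes g: "graph V E" and d: "deg E x = 2" and "{x,a} \<in> E" "{x,b} \<in> E" "{x,c} \<in> E"
  shows "a = b \<or> a = c \<or> b = c"
proof (rule ccontr)
  assume "\<not> ?thesis"
  then have "card {a,b,c} = 3" by auto
  moreover have "{a,b,c} \<subseteq> nbrs E x" using assms unfolding nbrs_def by auto
  ultimately have "3 \<le> card (nbrs E x)" using nbrs_fin[OF g] card_mono by metis
  then show False using d deg_nbrs[OF g] by auto
qed

lemma walk_set: assumes g: "graph V E" and w: "walk E p" and l: "2 \<le> length p" shows "set p \<subseteq> V"
proof
  fix x assume "x \<in> set p"
  then obtain i where i: "i < length p" "p!i = x" by (meson in_set_conv_nth)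
  show "x \<in> V"
  proof (cases "Suc i < length p")
    case True
    then have "{p!i, p!Suc i} \<in> E" using w unfolding walk_def by auto
    then show ?thesis using graph_edge[OF g] i by auto
  next
    case False
    then have "Suc (i - 1) < length p" "Suc (i-1) = i" using i l by auto
    then have "{p!(i-1), p!i} \<in> E" using w unfolding walk_def by metis
    then show ?thesis using graph_edge[OF g] i by auto
  qed
qed

lemma path_len: assumes g: "graph V E" and w: "gpath E p" and l: "2 \<le> length p" shows "length p \<le> card V"
proof -
  have "set p \<subseteq> V" using walk_set[OF g _ l] w unfolding gpath_def by auto
  then have "card (set p) \<le> card V" using g unfolding graph_def by (simp add: card_mono)
  then show ?thesis using w unfolding gpath_def by (simp add: distinct_card)
qed

lemma SP_fin: assumes g: "graph V E" shows "finite (SP E)"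
proof -
  have "SP E \<subseteq> {xs. set xs \<subseteq> V \<and> length xs \<le> card V}"
    using walk_set[OF g] path_len[OF g] unfolding SP_def segment_def gpath_def by auto
  then show ?thesis using finite_lists_length_le[of V "card V"] g[unfolded graph_def] finite_subset by blast
qed

lemma seg_last: "segment E p \<Longrightarrow> last p = p!(length p - 1)"
  unfolding segment_def by (metis last_conv_nth list.size(3) not_numeral_le_zero)

lemma seg_hd: "segment E p \<Longrightarrow> hd p = p!0"
  unfolding segment_def by (metis hd_conv_nth list.size(3) not_numeral_le_zero)

lemma seg_inj:
  assumes g: "graph V E" and p: "segment E p" and q: "segment E q" and h0: "p!0 = q!0" and h1: "p!1 = q!1"
  shows "p = q"
proof -
  have pw: "\<forall>i. Suc i < length p \<longrightarrow> {p!i, p!Suc i} \<in> E" "distinct p" "2 \<le> length p"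
    using p unfolding segment_def gpath_def walk_def by auto
  have qw: "\<forall>i. Suc i < length q \<longrightarrow> {q!i, q!Suc i} \<in> E" "distinct q" "2 \<le> length q"
    using q unfolding segment_def gpath_def walk_def by auto
  have key: "Suc i < length p \<Longrightarrow> Suc i < length q \<and> p!i = q!i \<and> p!Suc i = q!Suc i" for i
  proof (induction i)
    case 0 then show ?case using h0 h1 qw by auto
  next
    case (Suc i)
    then have IH: "Suc i < length q" "p!i = q!i" "p!Suc i = q!Suc i" by auto
    let ?x = "p!Suc i"
    have dx: "deg E ?x = 2" using p Suc.prems unfolding segment_def by auto
    have lq: "Suc (Suc i) < length q"
    proof (rule ccontr)
      assume "\<not> ?thesis" then have "Suc i = length q - 1" using IH by auto
      then have "deg E (q!Suc i) \<noteq> 2" using q seg_last[OF q] unfolding segment_def by simp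
      then show False using dx IH by simp
    qed
    have "{p!i, ?x} \<in> E" using pw(1) Suc.prems by simp
    then have e10: "{?x, p!i} \<in> E" by (simp add: insert_commute)
    have e11: "{?x, p!Suc(Suc i)} \<in> E" using pw(1) Suc.prems by simp
    have "{q!Suc i, q!Suc (Suc i)} \<in> E" using qw(1) lq by simp
    then have e12: "{?x, q!Suc (Suc i)} \<in> E" using IH by simp
    note e1 = e10 e11 e12
    have n1: "p!Suc (Suc i) \<noteq> p!i" using pw(2) Suc.prems nth_eq_iff_index_eq by fastforce
    have n2: "q!Suc (Suc i) \<noteq> q!i" using qw(2) lq nth_eq_iff_index_eq by fastforce
    have "p!Suc(Suc i) = q!Suc(Suc i)" using deg2_three[OF g dx e1] n1 n2 IH by auto
    then show ?case using lq IH by auto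
  qed
  define m where "m = length p"
  have k: "m - 1 < length q" "p!(m-1) = q!(m-1)" using key[of "m - 2"] pw(3) unfolding m_def
    by (auto simp: Suc_diff_Suc numeral_2_eq_2)
  have "length q = m"
  proof (rule ccontr)
    assume "length q \<noteq> m"
    then have "0 < m - 1" "m - 1 < length q - 1" using k pw(3) unfolding m_def by auto
    then have "deg E (q!(m-1)) = 2" using q unfolding segment_def by auto
    moreover have "deg E (p!(m-1)) \<noteq> 2" using p seg_last[OF p] unfolding segment_def m_def by simp
    ultimately show False using k by simp
  qed
  moreover have "p!i = q!i" if "i < m" for i
  proof (cases "i = m - 1")
    case True then show ?thesis using k by simp
  next
    case False then show ?thesis using key[of i] that unfolding m_def by auto
  qed
  ultimately show ?thesis unfolding m_def by (simp add: nth_equalityI)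
qed

lemma seg_exists:
  assumes t: "tree V E" and e: "{z,y} \<in> E" and dz: "deg E z \<noteq> 2"
  shows "\<exists>p. segment E p \<and> p!0 = z \<and> p!1 = y"
proof -
  have g: "graph V E" using t by (rule tree_graph)
  define Q where "Q = {q. gpath E q \<and> 2 \<le> length q \<and> q!0 = z \<and> q!1 = y \<and> (\<forall>i. 0 < i \<and> i < length q - 1 \<longrightarrow> deg E (q!i) = 2)}"
  have zy: "z \<noteq> y" using graph_edge[OF g e] by auto
  have "[z,y] \<in> Q" unfolding Q_def gpath_def walk_def using e zy by (auto simp: less_Suc_eq)
  moreover have "\<forall>q. q \<in> Q \<longrightarrow> length q < card V + 1" using path_len[OF g] unfolding Q_def by fastforce
  ultimately obtain q where qQ: "q \<in> Q" and qmax: "\<forall>q'. q' \<in> Q \<longrightarrow> length q' \<le> length q"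
    using ex_has_greatest_nat[of "\<lambda>q. q \<in> Q" "[z,y]" length "card V + 1"] by blast
  have qp: "gpath E q" "2 \<le> length q" "q!0 = z" "q!1 = y" "\<forall>i. 0 < i \<and> i < length q - 1 \<longrightarrow> deg E (q!i) = 2"
    using qQ unfolding Q_def by auto
  have ne: "q \<noteq> []" using qp by auto
  have "deg E (last q) \<noteq> 2"
  proof
    assume dl: "deg E (last q) = 2"
    let ?pre = "q!(length q - 2)"
    have "{q!(length q - 2), q!Suc (length q - 2)} \<in> E" using qp unfolding gpath_def walk_def by auto
    moreover have "Suc (length q - 2) = length q - 1" using qp by auto
    ultimately have "{?pre, last q} \<in> E" using ne by (simp add: last_conv_nth)
    then have "{last q, ?pre} \<in> E" by (simp add: insert_commute)
    then have pn: "?pre \<in> nbrs E (last q)" unfolding nbrs_def by auto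
    have "card (nbrs E (last q)) = 2" using dl deg_nbrs[OF g] by auto
    then obtain a1 b1 where ab1: "nbrs E (last q) = {a1,b1}" "a1 \<noteq> b1" by (meson card_2_iff)
    define r where "r = (if a1 = ?pre then b1 else a1)"
    have r: "r \<in> nbrs E (last q)" "r \<noteq> ?pre" unfolding r_def using ab1 by auto
    have er: "{last q, r} \<in> E" using r unfolding nbrs_def by auto
    have rn: "r \<notin> set q" using path_last_nbr[OF t qp(1) qp(2) er] r by auto
    have "q @ [r] \<in> Q"
    proof -
      have "walk E (q @ [r])" unfolding walk_def
      proof (intro conjI allI impI)
        show "q @ [r] \<noteq> []" by simp
        fix i assume i: "Suc i < length (q @ [r])"
        show "{(q@[r])!i, (q@[r])!Suc i} \<in> E"
        proof (cases "Suc i < length q")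
          case True then show ?thesis using qp(1) by (simp add: nth_append gpath_def walk_def)
        next
          case False then have "i = length q - 1" using i by simp
          then show ?thesis using er ne False by (simp add: nth_append last_conv_nth)
        qed
      qed
      moreover have "distinct (q @ [r])" using qp(1) rn unfolding gpath_def by auto
      moreover have "\<forall>i. 0 < i \<and> i < length (q @ [r]) - 1 \<longrightarrow> deg E ((q @ [r])!i) = 2"
      proof (intro allI impI)
        fix i assume i: "0 < i \<and> i < length (q @ [r]) - 1"
        show "deg E ((q @ [r])!i) = 2"
        proof (cases "i = length q - 1")
          case True then show ?thesis using dl ne by (simp add: nth_append last_conv_nth)
        next
          case False
          moreover have "i < length q" using i by simp
          ultimately have "i < length q - 1" by linarith
          then show ?thesis using i qp(5) by (simp add: nth_append)
        qed
      qed
      ultimately show ?thesis using qp unfolding Q_def gpath_def by (auto simp: nth_append)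
    qed
    then show False using qmax by fastforce
  qed
  moreover have "deg E (hd q) \<noteq> 2" using dz qp ne by (simp add: hd_conv_nth)
  ultimately have "segment E q" using qp unfolding segment_def by auto
  then show ?thesis using qp by auto
qed

lemma dist_nth: "distinct p \<Longrightarrow> i < length p \<Longrightarrow> k < length p \<Longrightarrow> i \<noteq> k \<Longrightarrow> p!i \<noteq> p!k"
  by (simp add: nth_eq_iff_index_eq)

lemma seg_rev: assumes p: "segment E p" shows "segment E (rev p)"
proof -
  have pp: "gpath E p" "2 \<le> length p" "deg E (hd p) \<noteq> 2" "deg E (last p) \<noteq> 2"
    "\<forall>i. 0 < i \<and> i < length p - 1 \<longrightarrow> deg E (p!i) = 2" using p unfolding segment_def by auto
  have ne: "p \<noteq> []" using pp by auto
  have w: "walk E (rev p)" unfolding walk_def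
  proof (intro conjI allI impI)
    show "rev p \<noteq> []" using ne by simp
    fix i assume i: "Suc i < length (rev p)"
    have "{p!(length p - Suc (Suc i)), p!Suc (length p - Suc (Suc i))} \<in> E"
      using pp(1) i unfolding gpath_def walk_def by simp
    moreover have "Suc (length p - Suc (Suc i)) = length p - Suc i" using i by simp
    ultimately have "{p!(length p - Suc (Suc i)), p!(length p - Suc i)} \<in> E" by simp
    moreover have "rev p ! i = p!(length p - Suc i)" "rev p ! Suc i = p!(length p - Suc (Suc i))"
      using i by (auto simp: rev_nth)
    ultimately show "{rev p ! i, rev p ! Suc i} \<in> E" by (simp add: insert_commute)
  qed
  have int: "\<forall>i. 0 < i \<and> i < length (rev p) - 1 \<longrightarrow> deg E (rev p ! i) = 2"
  proof (intro allI impI)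
    fix i assume i: "0 < i \<and> i < length (rev p) - 1"
    then have "rev p ! i = p!(length p - Suc i)" by (auto simp: rev_nth)
    moreover have "0 < length p - Suc i \<and> length p - Suc i < length p - 1" using i by auto
    ultimately show "deg E (rev p ! i) = 2" using pp(5) by simp
  qed
  show ?thesis unfolding segment_def gpath_def using w int pp ne unfolding gpath_def
    by (simp add: hd_rev last_rev)
qed

lemma seg_fiber_hd:
  assumes t: "tree V E" and p: "segment E p" and q: "segment E q" and s: "set q = set p" and h: "hd q = hd p"
  shows "q = p"
proof -
  have g: "graph V E" using t by (rule tree_graph)
  have pp: "gpath E p" "2 \<le> length p" "\<forall>i. 0 < i \<and> i < length p - 1 \<longrightarrow> deg E (p!i) = 2"
    using p unfolding segment_def by auto
  have qq: "gpath E q" "2 \<le> length q" using q unfolding segment_def by auto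
  have h0: "q!0 = p!0" using h seg_hd[OF p] seg_hd[OF q] by simp
  have "q!1 \<in> set p" using s qq(2) by (metis One_nat_def Suc_le_lessD nth_mem numeral_2_eq_2 less_imp_le_nat Suc_le_eq)
  then obtain j where j: "j < length p" "p!j = q!1" by (meson in_set_conv_nth)
  have eq: "{q!0, q!Suc 0} \<in> E" using qq unfolding gpath_def walk_def by simp
  then have e0j: "{p!0, p!j} \<in> E" using h0 j by simp
  have "q!1 \<noteq> q!0" using qq unfolding gpath_def by (subst nth_eq_iff_index_eq) auto
  then have j0: "j \<noteq> 0" using j h0 by (metis One_nat_def)
  have "j = 1"
  proof (rule ccontr)
    assume j1: "j \<noteq> 1"
    show False
    proof (cases "j = length p - 1")
      case True
      have "last p = p!(length p - 1)" using seg_last[OF p] .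
      then have "{p!0, last p} \<in> E" using e0j True by simp
      then have "{last p, p!0} \<in> E" by (simp add: insert_commute)
      moreover have "p!0 \<in> set p" using pp(2) by (intro nth_mem) linarith
      ultimately have "p!0 = p!(length p - 2)" using path_last_nbr[OF t pp(1) pp(2)] by blast
      moreover have "distinct p" using pp unfolding gpath_def by simp
      moreover have "p!0 = p!(length p - 2) \<longleftrightarrow> 0 = length p - 2"
        by (rule nth_eq_iff_index_eq) (use pp(2) \<open>distinct p\<close> in auto)
      ultimately have "0 = length p - 2" by blast
      then show False using True j1 pp by simp
    next
      case False
      then have jr: "0 < j" "j < length p - 1" using j j0 by auto
      then have dj: "deg E (p!j) = 2" using pp(3) by auto
      have w: "\<forall>i. Suc i < length p \<longrightarrow> {p!i, p!Suc i} \<in> E" using pp(1) unfolding gpath_def walk_def by simp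
      have "{p!(j-1), p!j} \<in> E" using w[rule_format, of "j-1"] jr by simp
      then have a1: "{p!j, p!(j-1)} \<in> E" by (simp add: insert_commute)
      have a2: "{p!j, p!Suc j} \<in> E" using pp(1) jr unfolding gpath_def walk_def by simp
      have a3: "{p!j, p!0} \<in> E" using e0j by (simp add: insert_commute)
      have dp: "distinct p" using pp unfolding gpath_def by simp
      have "p!(j-1) \<noteq> p!Suc j" by (rule dist_nth[OF dp]) (use jr in auto)
      moreover have "p!(j-1) \<noteq> p!0" by (rule dist_nth[OF dp]) (use jr j1 in auto)
      moreover have "p!Suc j \<noteq> p!0" by (rule dist_nth[OF dp]) (use jr in auto)
      ultimately show False using deg2_three[OF g dj a1 a2 a3] by auto
    qed
  qed
  then show ?thesis using seg_inj[OF g q p] h0 j by simp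
qed

lemma seg_fiber:
  assumes t: "tree V E" and p: "segment E p" and q: "segment E q" and s: "set q = set p"
  shows "q = p \<or> q = rev p"
proof -
  have pp: "gpath E p" "2 \<le> length p" "\<forall>i. 0 < i \<and> i < length p - 1 \<longrightarrow> deg E (p!i) = 2"
    using p unfolding segment_def by auto
  have "hd q \<in> set p" using s q unfolding segment_def by (metis hd_in_set list.size(3) not_numeral_le_zero)
  then obtain j where j: "j < length p" "p!j = hd q" by (meson in_set_conv_nth)
  have "deg E (hd q) \<noteq> 2" using q unfolding segment_def by auto
  then have "j = 0 \<or> j = length p - 1" using pp(3) j by fastforce
  then show ?thesis
  proof
    assume "j = 0"
    then have "hd q = hd p" using j seg_hd[OF p] by simp
    then show ?thesis using seg_fiber_hd[OF t p q s] by simp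
  next
    assume "j = length p - 1"
    then have "hd q = hd (rev p)" using j seg_last[OF p] by (simp add: hd_rev)
    then show ?thesis using seg_fiber_hd[OF t seg_rev[OF p] q] s by simp
  qed
qed

lemma seg_count:
  assumes t: "tree V E"
  shows "2 * card (segments E) = (\<Sum>z\<in>{z\<in>V. deg E z \<noteq> 2}. deg E z)"
proof -
  have g: "graph V E" using t by (rule tree_graph)
  have fV: "finite V" using g unfolding graph_def by auto
  have fSP: "finite (SP E)" by (rule SP_fin[OF g])
  define N where "N = {z\<in>V. deg E z \<noteq> 2}"
  define D where "D = Sigma N (\<lambda>z. nbrs E z)"
  have bij: "bij_betw (\<lambda>p. (p!0, p!1)) (SP E) D"
  proof (rule bij_betwI')
    fix p q assume "p \<in> SP E" "q \<in> SP E"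
    then show "((p!0, p!1) = (q!0, q!1)) = (p = q)" using seg_inj[OF g] unfolding SP_def by auto
  next
    fix p assume "p \<in> SP E"
    then have sp: "segment E p" unfolding SP_def by simp
    have e: "{p!0, p!Suc 0} \<in> E" using sp unfolding segment_def gpath_def walk_def by simp
    have "deg E (p!0) \<noteq> 2" using sp seg_hd[OF sp] unfolding segment_def by simp
    then show "(p!0, p!1) \<in> D" using e graph_edge[OF g e] unfolding D_def N_def nbrs_def by simp
  next
    fix zy assume "zy \<in> D"
    then obtain z y where zy: "zy = (z,y)" "z \<in> V" "deg E z \<noteq> 2" "{z,y} \<in> E"
      unfolding D_def N_def nbrs_def by auto
    then obtain p where "segment E p" "p!0 = z" "p!1 = y" using seg_exists[OF t] by blast
    then show "\<exists>p\<in>SP E. zy = (p!0, p!1)" using zy unfolding SP_def by auto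
  qed
  have fN: "finite N" using fV unfolding N_def by simp
  have "card D = (\<Sum>z\<in>N. card (nbrs E z))" unfolding D_def using fN nbrs_fin[OF g] by simp
  also have "\<dots> = (\<Sum>z\<in>N. deg E z)" using deg_nbrs[OF g] by simp
  finally have c1: "card (SP E) = (\<Sum>z\<in>N. deg E z)" using bij_betw_same_card[OF bij] by simp
  define fib where "fib S = {p \<in> SP E. set p = S}" for S
  have un: "SP E = (\<Union>S\<in>segments E. fib S)" unfolding fib_def segments_SP by auto
  have fseg: "finite (segments E)" unfolding segments_SP using fSP by simp
  have c2: "card (fib S) = 2" if "S \<in> segments E" for S
  proof -
    from that obtain p where "p \<in> SP E" "S = set p" unfolding segments_SP by blast
    then have p: "segment E p" "S = set p" unfolding SP_def by auto
    have "fib S = {p, rev p}"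
    proof
      show "fib S \<subseteq> {p, rev p}" using seg_fiber[OF t p(1)] p unfolding fib_def SP_def by auto
      show "{p, rev p} \<subseteq> fib S" using p seg_rev[OF p(1)] unfolding fib_def SP_def by auto
    qed
    moreover have "p \<noteq> rev p"
    proof
      assume "p = rev p"
      then have "hd p = last p" by (metis hd_rev)
      moreover have "hd p = p!0" "last p = p!(length p - 1)" using seg_hd[OF p(1)] seg_last[OF p(1)] by auto
      moreover have "distinct p" "2 \<le> length p" using p unfolding segment_def gpath_def by auto
      ultimately have "p!0 = p!(length p - 1)" by simp
      then have "0 = length p - 1" using \<open>distinct p\<close> \<open>2 \<le> length p\<close> by (subst (asm) nth_eq_iff_index_eq) auto
      then show False using \<open>2 \<le> length p\<close> by simp
    qed
    ultimately show ?thesis by simp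
  qed
  have "card (SP E) = (\<Sum>S\<in>segments E. card (fib S))"
    unfolding un by (rule card_UN_disjoint) (use fseg fSP in \<open>auto simp: fib_def\<close>)
  also have "\<dots> = (\<Sum>S\<in>segments E. 2)" using c2 by simp
  also have "\<dots> = 2 * card (segments E)" by simp
  finally show ?thesis using c1 unfolding N_def by simp
qed

lemma nat_ineq: assumes "(a::nat) < b" "c < d" shows "a*d + b*c < a*c + b*d"
proof -
  have h1: "a * (d - c) < b * (d - c)" using assms by simp
  have h2: "a*(d-c) = a*d - a*c" "b*(d-c) = b*d - b*c" by (simp_all add: diff_mult_distrib2)
  have h3: "a*c \<le> a*d" "b*c \<le> b*d" using assms by simp_all
  show ?thesis using h1 h2 h3 by linarith
qed

lemma prod2: "a \<noteq> b \<Longrightarrow> (\<Prod>z\<in>{a,b}. f z) = f a * (f b :: nat)" by simp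

definition better :: "'a set \<Rightarrow> 'a set set \<Rightarrow> 'a set set \<Rightarrow> bool" where
  "better V E E' \<longleftrightarrow> tree V E' \<and> (\<forall>z\<in>V. deg E' z \<le> 4) \<and> card (segments E') = card (segments E) \<and> M2 E < M2 E'"

lemma swap_better:
  assumes t: "tree V E" and ch: "\<forall>z\<in>V. deg E z \<le> 4"
    and uv: "{u,v} \<in> E" and qb: "{q,b} \<in> E"
    and d: "u \<noteq> q" "v \<noteq> b" "u \<noteq> b" "q \<noteq> v"
    and nub: "{u,b} \<notin> E" and nqv: "{q,v} \<notin> E"
    and r: "reach (E - {{q,b}} - {{u,v}}) u q"
    and dq: "deg E u < deg E q" and dv: "deg E b < deg E v"
  shows "\<exists>E'. better V E E'"
proof -
  have g: "graph V E" using t by (rule tree_graph)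
  have fin: "finite E" using g by (rule graph_finE)
  have uv': "u \<noteq> v" "q \<noteq> b" using graph_edge[OF g uv] graph_edge[OF g qb] by auto
  define E1 where "E1 = insert {u,b} (E - {{q,b}})"
  have "reach (E - {{q,b}}) u q" using reach_mono[OF r] by auto
  then have "reach (E - {{q,b}}) q u" by (rule reach_sym)
  then have t1: "tree V E1" unfolding E1_def by (rule rotate_tree[OF t qb])
  have d1: "deg E1 z = (if z = q then deg E z - 1 else if z = u then deg E z + 1 else deg E z)" for z
    unfolding E1_def by (rule rotate_deg[OF fin qb nub]) (use d uv' in auto)
  have fin1: "finite E1" unfolding E1_def using fin by simp
  have uvne: "{u,v} \<noteq> {q,b}" using d uv' by (auto simp: doubleton_eq_iff)
  have uv1: "{u,v} \<in> E1" unfolding E1_def using uv uvne by simp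
  have qv1: "{q,v} \<notin> E1" unfolding E1_def using nqv d uv' by (auto simp: doubleton_eq_iff)
  define E2 where "E2 = insert {q,v} (E1 - {{u,v}})"
  have "E - {{q,b}} - {{u,v}} \<subseteq> E1 - {{u,v}}" unfolding E1_def by auto
  then have "reach (E1 - {{u,v}}) u q" using reach_mono[OF r] by blast
  then have t2: "tree V E2" unfolding E2_def by (rule rotate_tree[OF t1 uv1])
  have d2: "deg E2 z = (if z = u then deg E1 z - 1 else if z = q then deg E1 z + 1 else deg E1 z)" for z
    unfolding E2_def by (rule rotate_deg[OF fin1 uv1 qv1]) (use d uv' in auto)
  have dd: "deg E2 z = deg E z" for z
    using d1 d2 d dq by (cases "z = u"; cases "z = q") auto
  have ch2: "\<forall>z\<in>V. deg E2 z \<le> 4" using ch dd by simp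
  have "2 * card (segments E2) = 2 * card (segments E)"
    using seg_count[OF t2] seg_count[OF t] dd by simp
  then have sc: "card (segments E2) = card (segments E)" by simp
  define R where "R = E - {{q,b}} - {{u,v}}"
  define f where "f e = (\<Prod>z\<in>e. deg E z)" for e
  have ub_ne: "{u,b} \<noteq> {u,v}" using d uv' by (auto simp: doubleton_eq_iff)
  have E2R: "E2 = insert {q,v} (insert {u,b} R)" unfolding E2_def E1_def R_def using ub_ne by blast
  have ER: "E = insert {q,b} (insert {u,v} R)" unfolding R_def using uv qb by blast
  have finR: "finite R" unfolding R_def using fin by simp
  have n1: "{q,v} \<notin> insert {u,b} R" unfolding R_def using nqv d uv' by (auto simp: doubleton_eq_iff)
  have n2: "{u,b} \<notin> R" unfolding R_def using nub by auto
  have n3: "{q,b} \<notin> insert {u,v} R" unfolding R_def using uvne by auto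
  have n4: "{u,v} \<notin> R" unfolding R_def by auto
  have "M2 E2 = (\<Sum>e\<in>E2. f e)" unfolding M2_def f_def using dd by simp
  also have "\<dots> = f {q,v} + f {u,b} + (\<Sum>e\<in>R. f e)" unfolding E2R using finR n1 n2 by simp
  finally have m2: "M2 E2 = deg E q * deg E v + deg E u * deg E b + (\<Sum>e\<in>R. f e)"
    unfolding f_def using d by simp
  have "M2 E = f {q,b} + f {u,v} + (\<Sum>e\<in>R. f e)" unfolding M2_def f_def[symmetric]
    by (subst ER) (use finR n3 n4 in simp)
  then have m1: "M2 E = deg E q * deg E b + deg E u * deg E v + (\<Sum>e\<in>R. f e)"
    unfolding f_def using uv' by simp
  have "deg E u * deg E v + deg E q * deg E b < deg E u * deg E b + deg E q * deg E v"
    by (rule nat_ineq[OF dq dv])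
  then have "M2 E < M2 E2" using m1 m2 by simp
  then show ?thesis unfolding better_def using t2 ch2 sc by blast
qed

lemma no_tri:
  assumes t: "tree V E" and e: "{a,b} \<in> E" "{b,c} \<in> E" "{a,c} \<in> E" and d: "a \<noteq> b" "b \<noteq> c" "a \<noteq> c"
  shows False
proof -
  have "{a,c} \<noteq> {a,b}" using d by (auto simp: doubleton_eq_iff)
  then have r1: "reach (E - {{a,b}}) a c" using e(3) by (intro reach_edge) blast
  have "{c,b} = {b,c}" by (rule insert_commute)
  moreover have "{c,b} \<noteq> {a,b}" using d by (auto simp: doubleton_eq_iff)
  ultimately have r2: "reach (E - {{a,b}}) c b" using e(2) by (intro reach_edge) auto
  have "reach (E - {{a,b}}) a b" using reach_trans[OF r1 r2] .
  then show False using bridge[OF t e(1)] by simp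
qed

lemma deg_pos: assumes g: "graph V E" and e: "{z,y} \<in> E" shows "1 \<le> deg E z"
proof -
  have "y \<in> nbrs E z" using e unfolding nbrs_def by simp
  then have "card (nbrs E z) \<noteq> 0" using nbrs_fin[OF g] by auto
  then show ?thesis using deg_nbrs[OF g] by simp
qed

lemma merge_better:
  assumes t: "tree V E" and ch: "\<forall>z\<in>V. deg E z \<le> 4"
    and nu: "nbrs E u = {v,w,x}" and dvwx: "v \<noteq> w" "v \<noteq> x" "w \<noteq> x"
    and du: "deg E u = 3" and dv: "deg E v = 3" and dw: "3 \<le> deg E w"
    and dt: "deg E t = 3" and tu: "t \<noteq> u" and tv: "t \<noteq> v"
    and rt: "reach {e\<in>E. v \<notin> e} u t"
  shows "\<exists>E'. better V E E'"
proof -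
  have g: "graph V E" using t by (rule tree_graph)
  have fin: "finite E" using g by (rule graph_finE)
  have "v \<in> nbrs E u" "w \<in> nbrs E u" "x \<in> nbrs E u" using nu by auto
  then have uv: "{u,v} \<in> E" "{u,w} \<in> E" "{u,x} \<in> E" unfolding nbrs_def by auto
  have uvx: "u \<noteq> v" "u \<noteq> w" "u \<noteq> x" "u \<in> V" using graph_edge[OF g uv(1)] graph_edge[OF g uv(2)]
    graph_edge[OF g uv(3)] by auto
  have vu: "u \<in> nbrs E v" using uv(1) nbrs_sym unfolding nbrs_def by (simp add: insert_commute)
  have cv: "card (nbrs E v) = 3" using dv deg_nbrs[OF g] by simp
  have "card (nbrs E v - {u}) = 2" using cv vu nbrs_fin[OF g] by (simp add: card_Diff_singleton)
  then obtain y1 y2 where yy: "nbrs E v - {u} = {y1,y2}" "y1 \<noteq> y2" by (meson card_2_iff)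
  have nv: "nbrs E v = {u,y1,y2}" using yy vu by blast
  have "y1 \<in> nbrs E v" "y2 \<in> nbrs E v" using nv by auto
  then have vy: "{v,y1} \<in> E" "{v,y2} \<in> E" unfolding nbrs_def by auto
  have yu: "y1 \<noteq> u" "y2 \<noteq> u" using yy by blast+
  have yv: "y1 \<noteq> v" "y2 \<noteq> v" using graph_edge[OF g vy(1)] graph_edge[OF g vy(2)] by auto
  have nuy1: "{u,y1} \<notin> E"
  proof
    assume "{u,y1} \<in> E"
    then show False using no_tri[OF t uv(1) vy(1)] uvx yu yv by auto
  qed
  define Ev where "Ev = {e\<in>E. v \<notin> e}"
  have Evsub: "Ev \<subseteq> E - {{u,v}}" unfolding Ev_def by auto
  have rtu: "reach (E - {{u,v}}) u t" using reach_mono[OF rt] Evsub unfolding Ev_def by blast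
  have brg: "\<not> reach (E - {{u,v}}) u v" using bridge[OF t uv(1)] .
  have ty: "t \<noteq> y1 \<and> t \<noteq> y2"
  proof (rule ccontr)
    assume "\<not> ?thesis"
    then obtain y where y: "y = t" "{v,y} \<in> E" "y \<noteq> u" using vy yu by auto
    have "{y,v} = {v,y}" by (rule insert_commute)
    moreover have "{y,v} \<noteq> {u,v}" using y(3) tv y(1) by (auto simp: doubleton_eq_iff)
    ultimately have "reach (E - {{u,v}}) t v" using y by (intro reach_edge) auto
    then show False using reach_trans[OF rtu] brg by blast
  qed
  have nty2: "{t,y2} \<notin> E"
  proof
    assume e: "{t,y2} \<in> E"
    have "{t,y2} \<noteq> {u,v}" using tu tv by (auto simp: doubleton_eq_iff)
    then have r1: "reach (E - {{u,v}}) t y2" using e by (intro reach_edge) blast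
    have "{y2,v} = {v,y2}" by (rule insert_commute)
    moreover have "{y2,v} \<noteq> {u,v}" using yu by (auto simp: doubleton_eq_iff)
    ultimately have r2: "reach (E - {{u,v}}) y2 v" using vy by (intro reach_edge) auto
    show False using reach_trans[OF reach_trans[OF rtu r1] r2] brg by blast
  qed
  define E1 where "E1 = insert {u,y1} (E - {{v,y1}})"
  have "{v,u} = {u,v}" by (rule insert_commute)
  moreover have "{v,u} \<noteq> {v,y1}" using yu by (auto simp: doubleton_eq_iff)
  ultimately have "reach (E - {{v,y1}}) v u" using uv(1) by (intro reach_edge) auto
  then have t1: "tree V E1" unfolding E1_def by (rule rotate_tree[OF t vy(1)])
  have d1: "deg E1 z = (if z = v then deg E z - 1 else if z = u then deg E z + 1 else deg E z)" for z
    unfolding E1_def by (rule rotate_deg[OF fin vy(1) nuy1]) (use yv yu uvx in auto)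
  have fin1: "finite E1" unfolding E1_def using fin by simp
  have "{v,y2} \<noteq> {v,y1}" using yy(2) by (auto simp: doubleton_eq_iff)
  then have vy21: "{v,y2} \<in> E1" unfolding E1_def using vy(2) by blast
  have "{t,y2} \<noteq> {u,y1}" using tu ty by (auto simp: doubleton_eq_iff)
  then have nty21: "{t,y2} \<notin> E1" unfolding E1_def using nty2 by blast
  have "{v,u} \<noteq> {v,y2}" using yu by (auto simp: doubleton_eq_iff)
  then have "{v,u} \<in> E1 - {{v,y2}}" unfolding E1_def using \<open>{v,u} = {u,v}\<close> \<open>{v,u} \<noteq> {v,y1}\<close> uv(1) by auto
  then have rvu: "reach (E1 - {{v,y2}}) v u" by (rule reach_edge)
  have "Ev \<subseteq> E1 - {{v,y2}}" unfolding Ev_def E1_def by auto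
  then have "reach (E1 - {{v,y2}}) u t" using reach_mono[OF rt] unfolding Ev_def by blast
  then have "reach (E1 - {{v,y2}}) v t" using reach_trans[OF rvu] by blast
  define E2 where "E2 = insert {t,y2} (E1 - {{v,y2}})"
  have t2: "tree V E2" unfolding E2_def by (rule rotate_tree[OF t1 vy21]) fact
  have d2: "deg E2 z = (if z = v then deg E1 z - 1 else if z = t then deg E1 z + 1 else deg E1 z)" for z
    unfolding E2_def by (rule rotate_deg[OF fin1 vy21 nty21]) (use yv ty tv in auto)
  have dd_u: "deg E2 u = 4" using d1 d2 du uvx tu by simp
  have dd_v: "deg E2 v = 1" using d1 d2 dv uvx tv by simp
  have dd_t: "deg E2 t = 4" using d1 d2 dt tu tv by simp
  have dd_o: "deg E2 z = deg E z" if "z \<noteq> u" "z \<noteq> v" "z \<noteq> t" for z using d1 d2 that by simp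
  have dd_ge: "deg E z \<le> deg E2 z" if "z \<noteq> v" for z
    using d1 d2 that by (cases "z = u"; cases "z = t") auto
  have tV: "t \<in> V" using reach_in_V[OF g _ uvx(4)] reach_mono[OF rt] unfolding Ev_def by blast
  have vV: "v \<in> V" using graph_edge[OF g uv(1)] by simp
  have ch2: "\<forall>z\<in>V. deg E2 z \<le> 4"
  proof
    fix z assume "z \<in> V"
    then show "deg E2 z \<le> 4" using ch dd_u dd_v dd_t dd_o by (cases "z = u \<or> z = v \<or> z = t") auto
  qed
  define N where "N = {z\<in>V. deg E z \<noteq> 2}"
  have pw: "(deg E2 z \<noteq> 2) = (deg E z \<noteq> 2)" for z
  proof (cases "z = u \<or> z = v \<or> z = t")
    case True then show ?thesis using dd_u dd_v dd_t du dv dt by auto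
  next
    case False then show ?thesis using dd_o by simp
  qed
  have N2: "{z\<in>V. deg E2 z \<noteq> 2} = N" unfolding N_def using pw by simp
  have finN: "finite N" using g unfolding N_def graph_def by simp
  define A where "A = {u,v,t}"
  have AN: "A \<subseteq> N" unfolding A_def N_def using uvx vV tV du dv dt by auto
  have sA2: "(\<Sum>z\<in>A. deg E2 z) = 9" unfolding A_def using dd_u dd_v dd_t uvx tu tv by simp
  have sA: "(\<Sum>z\<in>A. deg E z) = 9" unfolding A_def using du dv dt uvx tu tv by simp
  have sNA: "(\<Sum>z\<in>N - A. deg E2 z) = (\<Sum>z\<in>N - A. deg E z)"
    by (rule sum.cong) (use dd_o in \<open>auto simp: A_def\<close>)
  have "(\<Sum>z\<in>N. deg E2 z) = (\<Sum>z\<in>N. deg E z)"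
    using sum.subset_diff[OF AN finN, of "deg E2"] sum.subset_diff[OF AN finN, of "deg E"] sA2 sA sNA by simp
  then have sc: "card (segments E2) = card (segments E)"
    using seg_count[OF t2] seg_count[OF t] N2 unfolding N_def by simp
  define C where "C = E - {{v,y1}} - {{v,y2}}"
  define f where "f e = (\<Prod>z\<in>e. deg E z)" for e
  define h where "h e = (\<Prod>z\<in>e. deg E2 z)" for e
  have finC: "finite C" unfolding C_def using fin by simp
  have "{u,y1} \<noteq> {v,y2}" using uvx yu by (auto simp: doubleton_eq_iff)
  then have E2C: "E2 = insert {t,y2} (insert {u,y1} C)" unfolding E2_def E1_def C_def by blast
  have EC: "E = insert {v,y1} (insert {v,y2} C)" unfolding C_def using vy by blast
  have m2a: "M2 E2 = (\<Sum>e\<in>E2. h e)" unfolding M2_def h_def by simp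
  have "{t,y2} \<notin> insert {u,y1} C" "{u,y1} \<notin> C"
    using nty2 nuy1 \<open>{t,y2} \<noteq> {u,y1}\<close> unfolding C_def by auto
  then have "(\<Sum>e\<in>E2. h e) = h {t,y2} + h {u,y1} + (\<Sum>e\<in>C. h e)"
    unfolding E2C using finC by simp
  then have "M2 E2 = h {t,y2} + h {u,y1} + (\<Sum>e\<in>C. h e)" using m2a by simp
  moreover have "M2 E = f {v,y1} + f {v,y2} + (\<Sum>e\<in>C. f e)"
  proof -
    have "{v,y1} \<notin> insert {v,y2} C" "{v,y2} \<notin> C" using \<open>{v,y2} \<noteq> {v,y1}\<close> unfolding C_def by auto
    then have "(\<Sum>e\<in>insert {v,y1} (insert {v,y2} C). f e) = f {v,y1} + f {v,y2} + (\<Sum>e\<in>C. f e)"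
      using finC by simp
    then show ?thesis unfolding M2_def f_def[symmetric] using EC by simp
  qed
  moreover have "h {t,y2} = 4 * deg E2 y2" unfolding h_def using dd_t ty by simp
  moreover have "h {u,y1} = 4 * deg E2 y1" unfolding h_def using dd_u yu by simp
  moreover have "f {v,y1} = 3 * deg E y1" "f {v,y2} = 3 * deg E y2" unfolding f_def using dv yv by auto
  moreover have "deg E y1 \<le> deg E2 y1" "deg E y2 \<le> deg E2 y2" using dd_ge yv by auto
  moreover have "1 \<le> deg E y1" "1 \<le> deg E y2" using deg_pos[OF g] vy by (metis insert_commute)+
  moreover have "(\<Sum>e\<in>C. f e) \<le> (\<Sum>e\<in>C. h e) + 1"
  proof -
    define C' where "C' = C - {{u,v},{u,w},{u,x}}"
    have inC: "{u,v} \<in> C" "{u,w} \<in> C" "{u,x} \<in> C" unfolding C_def using uv uvx yu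
      by (auto simp: doubleton_eq_iff)
    have dne: "{u,v} \<noteq> {u,w}" "{u,v} \<noteq> {u,x}" "{u,w} \<noteq> {u,x}" using dvwx uvx by (auto simp: doubleton_eq_iff)
    have CC: "C = insert {u,v} (insert {u,w} (insert {u,x} C'))" unfolding C'_def using inC by blast
    have finC': "finite C'" unfolding C'_def using finC by simp
    have nin: "{u,v} \<notin> insert {u,w} (insert {u,x} C')" "{u,w} \<notin> insert {u,x} C'" "{u,x} \<notin> C'"
      unfolding C'_def using dne by auto
    have sf: "(\<Sum>e\<in>C. f e) = f {u,v} + f {u,w} + f {u,x} + (\<Sum>e\<in>C'. f e)"
      by (subst CC) (use finC' nin in simp)
    have sh: "(\<Sum>e\<in>C. h e) = h {u,v} + h {u,w} + h {u,x} + (\<Sum>e\<in>C'. h e)"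
      by (subst CC) (use finC' nin in simp)
    have mono: "(\<Sum>e\<in>C'. f e) \<le> (\<Sum>e\<in>C'. h e)"
    proof (rule sum_mono)
      fix e assume eC: "e \<in> C'"
      have "v \<notin> e"
      proof
        assume ve: "v \<in> e"
        have "e \<in> E" using eC unfolding C'_def C_def by auto
        then have "card e = 2" using g unfolding graph_def by auto
        then obtain a b where ab: "e = {a,b}" "a \<noteq> b" by (meson card_2_iff)
        define y where "y = (if a = v then b else a)"
        have ey: "e = {v,y}" unfolding y_def using ab ve by auto
        then have "y \<in> nbrs E v" using \<open>e \<in> E\<close> unfolding nbrs_def by simp
        then have "y = u \<or> y = y1 \<or> y = y2" using nv by auto
        moreover have "{v,u} = {u,v}" by (rule insert_commute)
        ultimately show False using eC ey unfolding C'_def C_def by auto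
      qed
      have "\<forall>i\<in>e. 0 \<le> deg E i \<and> deg E i \<le> deg E2 i"
      proof
        fix i assume "i \<in> e"
        then have "i \<noteq> v" using \<open>v \<notin> e\<close> by auto
        then show "0 \<le> deg E i \<and> deg E i \<le> deg E2 i" using dd_ge by simp
      qed
      then show "f e \<le> h e" unfolding f_def h_def by (intro prod_mono) auto
    qed
    have "f {u,v} = 9" "f {u,w} = 3 * deg E w" "f {u,x} = 3 * deg E x" unfolding f_def using du dv uvx by auto
    moreover have "h {u,v} = 4" "h {u,w} = 4 * deg E2 w" "h {u,x} = 4 * deg E2 x"
      unfolding h_def using dd_u dd_v uvx by auto
    moreover have "deg E w \<le> deg E2 w" "deg E x \<le> deg E2 x" using dd_ge dvwx by auto
    moreover have "1 \<le> deg E x" using deg_pos[OF g] uv(3) by (metis insert_commute)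
    ultimately show ?thesis using sf sh mono dw by linarith
  qed
  ultimately have "M2 E < M2 E2" by linarith
  then show ?thesis unfolding better_def using t2 ch2 sc by blast
qed

lemma caseB:
  assumes t: "tree V E" and ch: "\<forall>z\<in>V. deg E z \<le> 4"
    and nu: "nbrs E u = {v,w,x}" and dvwx: "v \<noteq> w" "v \<noteq> x" "w \<noteq> x"
    and du: "deg E u = 3" and dv: "3 \<le> deg E v" and dw: "deg E w = 4"
  shows "\<exists>E'. better V E E'"
proof -
  have g: "graph V E" using t by (rule tree_graph)
  have "v \<in> nbrs E u" "w \<in> nbrs E u" using nu by auto
  then have uv: "{u,v} \<in> E" "{u,w} \<in> E" unfolding nbrs_def by auto
  have uvx: "u \<noteq> v" "u \<noteq> w" "u \<in> V" using graph_edge[OF g uv(1)] graph_edge[OF g uv(2)] by auto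
  define Q where "Q = {P. gpath E P \<and> 2 \<le> length P \<and> P!0 = u \<and> P!1 = w}"
  have "[u,w] \<in> Q" unfolding Q_def gpath_def walk_def using uv uvx by (auto simp: less_Suc_eq)
  moreover have "\<forall>P. P \<in> Q \<longrightarrow> length P < card V + 1" using path_len[OF g] unfolding Q_def by fastforce
  ultimately obtain P where PQ: "P \<in> Q" and Pmax: "\<forall>P'. P' \<in> Q \<longrightarrow> length P' \<le> length P"
    using ex_has_greatest_nat[of "\<lambda>P. P \<in> Q" "[u,w]" length "card V + 1"] by blast
  define m where "m = length P"
  have Pp: "gpath E P" "2 \<le> m" "P!0 = u" "P!1 = w" using PQ unfolding Q_def m_def by auto
  have dP: "distinct P" and wP: "\<forall>i. Suc i < m \<longrightarrow> {P!i, P!Suc i} \<in> E"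
    using Pp(1) unfolding gpath_def walk_def m_def by auto
  have ne: "P \<noteq> []" using Pp(2) unfolding m_def by auto
  have lastP: "last P = P!(m-1)" using ne unfolding m_def by (simp add: last_conv_nth)
  have dl: "deg E (P!(m-1)) \<noteq> 4"
  proof
    assume d4: "deg E (P!(m-1)) = 4"
    let ?pre = "P!(m-2)"
    have "Suc (m-2) = m - 1" using Pp(2) by simp
    moreover have "{P!(m-2), P!Suc (m-2)} \<in> E" using wP Pp(2) by simp
    ultimately have "{?pre, last P} \<in> E" using lastP by simp
    then have "{last P, ?pre} \<in> E" by (simp add: insert_commute)
    have "card (nbrs E (last P)) = 4" using d4 lastP deg_nbrs[OF g] by simp
    then have "card (nbrs E (last P) - {?pre}) \<ge> 3" by (simp add: card_Diff_singleton_if)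
    then have "nbrs E (last P) - {?pre} \<noteq> {}"
    proof (intro notI)
      assume "nbrs E (last P) - {?pre} = {}"
      with \<open>card (nbrs E (last P) - {?pre}) \<ge> 3\<close> show False by simp
    qed
    then obtain r where r: "r \<in> nbrs E (last P)" "r \<noteq> ?pre" by blast
    have er: "{last P, r} \<in> E" using r unfolding nbrs_def by auto
    have rn: "r \<notin> set P" using path_last_nbr[OF t Pp(1) _ er] Pp(2) r unfolding m_def by auto
    have "P @ [r] \<in> Q"
    proof -
      have "walk E (P @ [r])" unfolding walk_def
      proof (intro conjI allI impI)
        show "P @ [r] \<noteq> []" by simp
        fix i assume i: "Suc i < length (P @ [r])"
        show "{(P@[r])!i, (P@[r])!Suc i} \<in> E"
        proof (cases "Suc i < length P")
          case True then show ?thesis using wP unfolding m_def by (simp add: nth_append)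
        next
          case False then have "i = length P - 1" using i by simp
          then show ?thesis using er ne False by (simp add: nth_append last_conv_nth)
        qed
      qed
      moreover have "distinct (P @ [r])" using dP rn by auto
      moreover have "(P @ [r])!0 = u" "(P @ [r])!1 = w" using Pp unfolding m_def by (auto simp: nth_append)
      ultimately show ?thesis using Pp unfolding Q_def gpath_def m_def by auto
    qed
    then show False using Pmax by fastforce
  qed
  define J where "J = {j. 1 \<le> j \<and> j < m \<and> deg E (P!j) = 4}"
  have J1: "1 \<in> J" unfolding J_def using Pp dw by auto
  have finJ: "finite J" unfolding J_def by (rule finite_subset[of _ "{..<m}"]) auto
  define j0 where "j0 = Max J"
  have j0J: "j0 \<in> J" unfolding j0_def using finJ J1 by (intro Max_in) auto
  have j0max: "j \<le> j0" if "j \<in> J" for j unfolding j0_def using finJ that by simp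
  have j0p: "1 \<le> j0" "j0 < m" "deg E (P!j0) = 4" using j0J unfolding J_def by auto
  have "j0 \<noteq> m - 1" using dl j0p by auto
  then have sj: "Suc j0 < m" using j0p by simp
  define q where "q = P!j0"
  define b where "b = P!Suc j0"
  have qb: "{q,b} \<in> E" unfolding q_def b_def using wP sj by simp
  have dq: "deg E q = 4" unfolding q_def using j0p by simp
  have "Suc j0 \<notin> J" using j0max by fastforce
  then have "deg E b \<noteq> 4" unfolding J_def b_def using sj by simp
  moreover have "b \<in> V" using graph_edge[OF g qb] by simp
  ultimately have db: "deg E b \<le> 3" using ch by fastforce
  have brg: "\<not> reach (E - {{u,v}}) u v" using bridge[OF t uv(1)] .
  have vP: "v \<notin> set P"
  proof
    assume "v \<in> set P"
    then obtain i where i: "i < m" "P!i = v" unfolding m_def by (meson in_set_conv_nth)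
    have i0: "i \<noteq> 0"
    proof
      assume "i = 0" then have "v = u" using i(2) Pp(3) by simp
      then show False using uvx by simp
    qed
    have i1: "i \<noteq> 1"
    proof
      assume "i = 1" then have "v = w" using i(2) Pp(4) by simp
      then show False using dvwx by simp
    qed
    have "{P!l, P!Suc l} \<in> E - {{u,v}}" if l: "0 \<le> l \<and> l < i" for l
    proof -
      have "{P!l, P!Suc l} \<noteq> {u,v}"
      proof
        assume "{P!l, P!Suc l} = {u,v}"
        then consider "P!l = u" "P!Suc l = v" | "P!l = v" by (auto simp: doubleton_eq_iff)
        then show False
        proof cases
          case 1
          have "l = 0"
          proof (rule ccontr)
            assume "l \<noteq> 0"
            then have "P!l \<noteq> P!0" using dist_nth[OF dP, of l 0] l i ne unfolding m_def by auto
            then show False using 1 Pp by simp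
          qed
          then show False using 1 Pp dvwx by simp
        next
          case 2
          then have "P!l \<noteq> P!i \<Longrightarrow> False" using i by simp
          moreover have "P!l \<noteq> P!i" using dist_nth[OF dP, of l i] l i unfolding m_def by auto
          ultimately show False by blast
        qed
      qed
      then show ?thesis using wP l i by auto
    qed
    then have "reach (E - {{u,v}}) (P!0) (P!i)" by (intro seg_reach) auto
    then show False using brg i Pp by simp
  qed
  have rEv: "reach {e\<in>E. v \<notin> e} u (P!i)" if "i < m" for i
  proof -
    have "{P!l, P!Suc l} \<in> {e\<in>E. v \<notin> e}" if l: "0 \<le> l \<and> l < i" for l
    proof -
      have "P!l \<in> set P" "P!Suc l \<in> set P" using l \<open>i < m\<close> unfolding m_def by auto
      then have "v \<notin> {P!l, P!Suc l}" using vP by auto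
      then show ?thesis using wP l \<open>i < m\<close> by auto
    qed
    then have "reach {e\<in>E. v \<notin> e} (P!0) (P!i)" by (intro seg_reach) auto
    then show ?thesis using Pp by simp
  qed
  have qu: "q \<noteq> u" unfolding q_def using dist_nth[OF dP, of j0 0] j0p Pp ne unfolding m_def by auto
  have bu: "b \<noteq> u" unfolding b_def using dist_nth[OF dP, of "Suc j0" 0] sj Pp ne unfolding m_def by auto
  have qv: "q \<noteq> v" unfolding q_def using vP j0p unfolding m_def by auto
  have bv: "b \<noteq> v" unfolding b_def using vP sj unfolding m_def by auto
  show ?thesis
  proof (cases "deg E b < deg E v")
    case True
    have nub: "{u,b} \<notin> E"
    proof
      assume eub: "{u,b} \<in> E"
      define P' where "P' = take (Suc (Suc j0)) P"
      have gP': "gpath E P'" unfolding P'_def by (rule gpath_take[OF Pp(1)]) simp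
      have lP': "length P' = Suc (Suc j0)" unfolding P'_def using sj unfolding m_def by simp
      have "P' \<noteq> []" using lP' by auto
      then have "last P' = P'!(length P' - 1)" by (simp add: last_conv_nth)
      also have "\<dots> = P'!(Suc j0)" using lP' by simp
      also have "\<dots> = b" unfolding P'_def b_def by simp
      finally have "last P' = b" .
      then have "{last P', u} \<in> E" using eub by (simp add: insert_commute)
      moreover have "P'!0 = u" unfolding P'_def using Pp by simp
      then have "u \<in> set P'" using lP' by (metis nth_mem zero_less_Suc)
      ultimately have "u = P'!(length P' - 2)" using path_last_nbr[OF t gP'] lP' by simp
      moreover have "P'!(length P' - 2) = P!j0" using lP' unfolding P'_def by simp
      ultimately have "u = q" unfolding q_def by simp
      then show False using qu by simp
    qed
    have nqv: "{q,v} \<notin> E"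
    proof
      assume e: "{q,v} \<in> E"
      have sub: "{e\<in>E. v \<notin> e} \<subseteq> E - {{u,v}}" by auto
      have r1: "reach (E - {{u,v}}) u q" using reach_mono[OF rEv[OF j0p(2)] sub] unfolding q_def .
      have "v \<noteq> q" using qv by simp
      then have "{q,v} \<noteq> {u,v}" using qu by (simp add: doubleton_eq_iff)
      then have r2: "reach (E - {{u,v}}) q v" using e by (intro reach_edge) blast
      show False using brg reach_trans[OF r1 r2] by blast
    qed
    have r: "reach (E - {{q,b}} - {{u,v}}) u q"
    proof -
      have "{P!l, P!Suc l} \<in> E - {{q,b}} - {{u,v}}" if l: "0 \<le> l \<and> l < j0" for l
      proof -
        have "{P!l, P!Suc l} \<noteq> {q,b}"
        proof
          assume "{P!l, P!Suc l} = {q,b}"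
          then have "{P!l, P!Suc l} = {P!j0, P!Suc j0}" unfolding q_def b_def .
          then have "l = j0" using dedge_inj[OF dP, of l j0] l sj unfolding m_def by simp
          then show False using l by simp
        qed
        moreover have "P!l \<in> set P" "P!Suc l \<in> set P" using l sj unfolding m_def by auto
        then have "{P!l, P!Suc l} \<noteq> {u,v}" using vP by (auto simp: doubleton_eq_iff)
        ultimately show ?thesis using wP l sj by auto
      qed
      then have "reach (E - {{q,b}} - {{u,v}}) (P!0) (P!j0)" by (intro seg_reach) auto
      then show ?thesis using Pp unfolding q_def by simp
    qed
    show ?thesis
      by (rule swap_better[OF t ch uv(1) qb]) (use qu bv bu qv nub nqv r dq du True in auto)
  next
    case False
    then have dv3: "deg E v = 3" "deg E b = 3" using dv db by auto
    show ?thesis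
      by (rule merge_better[OF t ch nu dvwx du dv3(1)]) (use dw dv3 bu bv rEv[OF sj] in \<open>auto simp: b_def\<close>)
  qed
qed

theorem lemma6:
  fixes V :: "'a set" and E :: "'a set set" and n k :: nat and u :: 'a
  assumes "3 \<le> k" and "k \<le> n - 1"
    and "in_CT V E n k"
    and "\<forall>(V' :: 'a set) E'. in_CT V' E' n k \<longrightarrow> M2 E' \<le> M2 E"
    and "u \<in> V" and "deg E u = 3"
  shows "card {w. {u, w} \<in> E \<and> deg E w > 2} \<le> 1"
proof (rule ccontr)
  assume H: "\<not> card {w. {u, w} \<in> E \<and> deg E w > 2} \<le> 1"
  have t: "tree V E" and ch: "\<forall>z\<in>V. deg E z \<le> 4" and cV: "card V = n" and cs: "card (segments E) = k"
    using assms(3) unfolding in_CT_def chemical_tree_def by auto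
  have nob: "\<not> better V E E'" for E'
  proof
    assume bE: "better V E E'"
    then have "in_CT V E' n k" using cV cs unfolding better_def in_CT_def chemical_tree_def by auto
    then have "M2 E' \<le> M2 E" using assms(4) by blast
    then show False using bE unfolding better_def by simp
  qed
  have g: "graph V E" using t by (rule tree_graph)
  define B where "B = {w. {u, w} \<in> E \<and> deg E w > 2}"
  have BN: "B \<subseteq> nbrs E u" unfolding B_def nbrs_def by auto
  have finB: "finite B" using finite_subset[OF BN nbrs_fin[OF g]] .
  have "\<not> card B \<le> Suc 0" using H unfolding B_def by simp
  then obtain v w where vw: "v \<in> B" "w \<in> B" "v \<noteq> w" using card_le_Suc0_iff_eq[OF finB] by blast
  have vwN: "v \<in> nbrs E u" "w \<in> nbrs E u" using vw BN by auto
  have cu: "card (nbrs E u) = 3" using assms(6) deg_nbrs[OF g] by simp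
  have "card (nbrs E u - {v,w}) = 1"
    using cu vwN vw(3) nbrs_fin[OF g] by (simp add: card_Diff_subset)
  then obtain x where x: "nbrs E u - {v,w} = {x}" using card_1_singleton_iff by (metis One_nat_def)
  have nu: "nbrs E u = {v,w,x}" using x vwN by blast
  have xvw: "x \<noteq> v" "x \<noteq> w" using x by auto
  have uvw: "{u,v} \<in> E" "{u,w} \<in> E" using vwN unfolding nbrs_def by auto
  have vV: "v \<in> V" "w \<in> V" using graph_edge[OF g uvw(1)] graph_edge[OF g uvw(2)] by auto
  have dvw: "3 \<le> deg E v" "deg E v \<le> 4" "3 \<le> deg E w" "deg E w \<le> 4"
    using vw vV ch unfolding B_def by auto
  have "\<exists>E'. better V E E'"
  proof (cases "deg E w = 4")
    case True
    show ?thesis by (rule caseB[OF t ch nu]) (use vw xvw assms(6) dvw True in auto)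
  next
    case False
    show ?thesis
    proof (cases "deg E v = 4")
      case True
      have nu': "nbrs E u = {w,v,x}" using nu by auto
      show ?thesis by (rule caseB[OF t ch nu']) (use vw xvw assms(6) dvw True in auto)
    next
      case False2: False
      have "v \<notin> {u,w}" using vw graph_edge[OF g uvw(1)] by auto
      then have "reach {e\<in>E. v \<notin> e} u w" using uvw(2) by (intro reach_edge) auto
      moreover have "deg E v = 3" "deg E w = 3" using dvw False False2 by auto
      ultimately show ?thesis
        using merge_better[OF t ch nu] vw xvw assms(6) graph_edge[OF g uvw(2)] by auto
    qed
  qed
  then show False using nob by blast
qed

end
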